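(* Let $L \subseteq \Sigma^*$ be a commutative star-free language. Then for every $\Gamma \subseteq \Sigma$ the language $\pi_\Gamma(L)$ is commutative and star-free.
   Context: $L$ is commutative if for every $w \in L$, every word $u$ with $|u|_a = |w|_a$ for all letters $a$ also lies in $L$ ($|u|_a$ = number of occurrences of $a$ in $u$). Star-free languages over an alphabet are the smallest class containing $\{\varepsilon\}$, the full monoid and the singletons $\{a\}$, closed under Boolean operations and concatenation. For $\Gamma \subseteq \Sigma$, $\pi_\Gamma : \Sigma^* \to \Gamma^*$ is the homomorphism with $\pi_\Gamma(x) = x$ for $x \in \Gamma$ and $\pi_\Gamma(x) = \varepsilon$ otherwise, applied elementwise to languages. *)

theory Defs
  imports Main
begin

definition conc :: "'a list set \<Rightarrow> 'a list set \<Rightarrow> 'a list set" where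
  "conc L M = {u @ v | u v. u \<in> L \<and> v \<in> M}"

inductive star_free :: "'a set \<Rightarrow> 'a list set \<Rightarrow> bool" for S :: "'a set" where
  sf_eps: "star_free S {[]}"
| sf_full: "star_free S (lists S)"
| sf_letter: "a \<in> S \<Longrightarrow> star_free S {[a]}"
| sf_compl: "star_free S L \<Longrightarrow> star_free S (lists S - L)"
| sf_union: "star_free S L \<Longrightarrow> star_free S M \<Longrightarrow> star_free S (L \<union> M)"
| sf_inter: "star_free S L \<Longrightarrow> star_free S M \<Longrightarrow> star_free S (L \<inter> M)"
| sf_conc: "star_free S L \<Longrightarrow> star_free S M \<Longrightarrow> star_free S (conc L M)"

definition commutative_lang :: "'a list set \<Rightarrow> bool" where
  "commutative_lang L \<longleftrightarrow>
     (\<forall>w \<in> L. \<forall>u. (\<forall>a. count_list u a = count_list w a) \<longrightarrow> u \<in> L)"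

definition proj :: "'a set \<Rightarrow> 'a list \<Rightarrow> 'a list" where
  "proj G w = filter (\<lambda>x. x \<in> G) w"

end

theory Submission imports Defs "HOL-Library.FuncSet" begin

lemma count_rep[simp]: "count_list (replicate m b) a = (if a = b then m else 0)"
  by (induction m) auto

lemma count_filter: "count_list (filter P w) a = (if P a then count_list w a else 0)"
  by (induction w) auto

lemma count_removeAll: "count_list (removeAll b w) a = (if a = b then 0 else count_list w a)"
  by (induction w) auto

lemma sf_lists: "star_free S L \<Longrightarrow> L \<subseteq> lists S"
  by (induction rule: star_free.induct) (fastforce simp: conc_def)+

lemma split3:
  assumes "u @ v = x @ replicate m a @ z"
  shows "(\<exists>x2. x = u @ x2 \<and> v = x2 @ replicate m a @ z) \<or>
         (\<exists>i j. i + j = m \<and> u = x @ replicate i a \<and> v = replicate j a @ z) \<or>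
         (\<exists>z1. z = z1 @ v \<and> u = x @ replicate m a @ z1)"
proof -
  from assms obtain us where "u = x @ us \<and> us @ v = replicate m a @ z \<or> u @ us = x \<and> v = us @ replicate m a @ z"
    by (auto simp: append_eq_append_conv2)
  then show ?thesis
  proof
    assume h: "u = x @ us \<and> us @ v = replicate m a @ z"
    then obtain ws where "us = replicate m a @ ws \<and> ws @ v = z \<or> us @ ws = replicate m a \<and> v = ws @ z"
      by (auto simp: append_eq_append_conv2)
    then show ?thesis
    proof
      assume "us = replicate m a @ ws \<and> ws @ v = z" then show ?thesis using h by auto
    next
      assume h2: "us @ ws = replicate m a \<and> v = ws @ z"
      then have "us = replicate (length us) a" "ws = replicate (length ws) a"
        by (metis Un_iff in_set_replicate replicate_length_same set_append)+
      moreover have "length us + length ws = m" using h2 by (metis length_append length_replicate)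
      ultimately show ?thesis using h h2 by metis
    qed
  next
    assume "u @ us = x \<and> v = us @ replicate m a @ z" then show ?thesis by auto
  qed
qed

definition pump :: "nat \<Rightarrow> 'a list set \<Rightarrow> bool" where
  "pump n L \<longleftrightarrow> (\<forall>x z a m m'. n \<le> m \<longrightarrow> n \<le> m' \<longrightarrow>
      (x @ replicate m a @ z \<in> L \<longleftrightarrow> x @ replicate m' a @ z \<in> L))"

lemma pump_mono: "pump n L \<Longrightarrow> n \<le> n' \<Longrightarrow> pump n' L"
  unfolding pump_def using le_trans by blast

lemma pumpI:
  assumes "\<And>x z a m m'. n \<le> m \<Longrightarrow> n \<le> m' \<Longrightarrow> x @ replicate m a @ z \<in> L \<Longrightarrow> x @ replicate m' a @ z \<in> L"
  shows "pump n L"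
  unfolding pump_def using assms by blast

lemma pump_conc:
  assumes pL: "pump nL L" and pM: "pump nM M"
  shows "pump (nL + nM + 1) (conc L M)"
proof (rule pumpI)
  fix x z a m m'
  assume m: "nL + nM + 1 \<le> m" and m': "nL + nM + 1 \<le> m'" and mem: "x @ replicate m a @ z \<in> conc L M"
  have pL': "\<And>x z a m m'. nL \<le> m \<Longrightarrow> nL \<le> m' \<Longrightarrow> x @ replicate m a @ z \<in> L \<Longrightarrow> x @ replicate m' a @ z \<in> L"
    using pL unfolding pump_def by blast
  have pM': "\<And>x z a m m'. nM \<le> m \<Longrightarrow> nM \<le> m' \<Longrightarrow> x @ replicate m a @ z \<in> M \<Longrightarrow> x @ replicate m' a @ z \<in> M"
    using pM unfolding pump_def by blast
  from mem obtain u v where uv: "u \<in> L" "v \<in> M" "u @ v = x @ replicate m a @ z"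
    unfolding conc_def by auto
  from split3[OF uv(3)] show "x @ replicate m' a @ z \<in> conc L M"
  proof (elim disjE exE conjE)
    fix x2 assume h: "x = u @ x2" "v = x2 @ replicate m a @ z"
    have "nM \<le> m" "nM \<le> m'" using m m' by arith+
    then have "x2 @ replicate m' a @ z \<in> M" using pM' uv(2) h by blast
    moreover have "x @ replicate m' a @ z = u @ (x2 @ replicate m' a @ z)" using h by simp
    ultimately show ?thesis using uv(1) unfolding conc_def by blast
  next
    fix z1 assume h: "z = z1 @ v" "u = x @ replicate m a @ z1"
    have "nL \<le> m" "nL \<le> m'" using m m' by arith+
    then have "x @ replicate m' a @ z1 \<in> L" using pL' uv(1) h by blast
    moreover have "x @ replicate m' a @ z = (x @ replicate m' a @ z1) @ v" using h by simp
    ultimately show ?thesis using uv(2) unfolding conc_def by blast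
  next
    fix i j assume h: "i + j = m" "u = x @ replicate i a" "v = replicate j a @ z"
    have "\<exists>i' j'. i' + j' = m' \<and> x @ replicate i' a @ [] \<in> L \<and> [] @ replicate j' a @ z \<in> M"
    proof -
    have uL: "x @ replicate i a @ [] \<in> L" using uv(1) h by simp
    have vM: "[] @ replicate j a @ z \<in> M" using uv(2) h by simp
    show ?thesis
    proof (cases "i < nL")
      case True
      have "nM \<le> j" "nM \<le> m' - i" using True h m m' by arith+
      then have "[] @ replicate (m' - i) a @ z \<in> M" using pM'[OF _ _ vM] by blast
      then show ?thesis using uL h m' True by (intro exI[of _ i] exI[of _ "m' - i"]) auto
    next
      case False
      show ?thesis
      proof (cases "j < nM")
        case True
        have "nL \<le> i" "nL \<le> m' - j" using True False h m m' by arith+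
        then have "x @ replicate (m' - j) a @ [] \<in> L" using pL'[OF _ _ uL] by blast
        then show ?thesis using vM h m' True by (intro exI[of _ "m' - j"] exI[of _ j]) auto
      next
        case False2: False
        have "nL \<le> i" "nM \<le> j" "nM \<le> m' - nL" using False False2 m' by arith+
        then have 1: "x @ replicate nL a @ [] \<in> L" and 2: "[] @ replicate (m' - nL) a @ z \<in> M"
          using pL'[OF _ _ uL] pM'[OF _ _ vM] by auto
        show ?thesis using 1 2 m' by (intro exI[of _ nL] exI[of _ "m' - nL"]) auto
      qed
    qed
    qed
    then obtain i' j' where "i' + j' = m'" "x @ replicate i' a \<in> L" "replicate j' a @ z \<in> M" by auto
    moreover have "x @ replicate m' a @ z = (x @ replicate i' a) @ (replicate j' a @ z)"
      using \<open>i' + j' = m'\<close> by (simp add: replicate_add[symmetric])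
    ultimately show ?thesis unfolding conc_def by blast
  qed
qed

lemma sf_pump: "star_free S L \<Longrightarrow> \<exists>n. pump n L"
proof (induction rule: star_free.induct)
  case sf_eps
  show ?case by (rule exI[of _ 1], rule pumpI) (auto)
next
  case sf_full
  show ?case by (rule exI[of _ 1], rule pumpI) auto
next
  case (sf_letter a)
  show ?case
  proof (rule exI[of _ 2], rule pumpI)
    fix x z b m m' assume "2 \<le> m" "x @ replicate m b @ z \<in> {[a]}"
    have "length (x @ replicate m b @ z) \<ge> 2" using \<open>2 \<le> m\<close> by simp
    moreover have "length (x @ replicate m b @ z) = 1" using \<open>x @ replicate m b @ z \<in> {[a]}\<close> by simp
    ultimately show "x @ replicate m' b @ z \<in> {[a]}" by simp
  qed
next
  case (sf_compl L)
  then obtain n where n: "pump n L" by auto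
  have pn: "pump (max n 1) L" using pump_mono[OF n] by simp
  show ?case
  proof (rule exI[of _ "max n 1"], rule pumpI)
    fix x z a m m' assume m: "max n 1 \<le> m" and m': "max n 1 \<le> m'"
      and mem: "x @ replicate m a @ z \<in> lists S - L"
    have "a \<in> S" using mem m by (cases m) auto
    then have "x @ replicate m' a @ z \<in> lists S" using mem by auto
    moreover have "x @ replicate m' a @ z \<notin> L" using mem pn m m' unfolding pump_def by blast
    ultimately show "x @ replicate m' a @ z \<in> lists S - L" by blast
  qed
next
  case (sf_union L M)
  then obtain n1 n2 where "pump n1 L" "pump n2 M" by auto
  then have "pump (max n1 n2) L" "pump (max n1 n2) M" using pump_mono by fastforce+
  then show ?case unfolding pump_def by blast
next
  case (sf_inter L M)
  then obtain n1 n2 where "pump n1 L" "pump n2 M" by auto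
  then have "pump (max n1 n2) L" "pump (max n1 n2) M" using pump_mono by fastforce+
  then show ?case unfolding pump_def by blast
next
  case (sf_conc L M)
  then show ?case using pump_conc by blast
qed


lemma cap_gen:
  assumes comm: "commutative_lang L" and pn: "pump n L" and fin: "finite A"
  shows "\<forall>w w'. (\<forall>a. count_list w a = count_list w' a \<or> (a \<in> A \<and> n \<le> count_list w a \<and> n \<le> count_list w' a))
            \<longrightarrow> w \<in> L \<longrightarrow> w' \<in> L"
  using fin
proof (induction A rule: finite_induct)
  case empty
  then show ?case using comm unfolding commutative_lang_def by auto
next
  case (insert b A)
  show ?case
  proof (intro allI impI)
    fix w w'
    assume c: "\<forall>a. count_list w a = count_list w' a \<or> (a \<in> insert b A \<and> n \<le> count_list w a \<and> n \<le> count_list w' a)"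
      and wL: "w \<in> L"
    define w0 where "w0 = replicate (count_list w b) b @ removeAll b w"
    define w'' where "w'' = replicate (count_list w' b) b @ removeAll b w"
    have "\<forall>a. count_list w0 a = count_list w a" unfolding w0_def by (auto simp: count_removeAll)
    then have "w0 \<in> L" using comm wL unfolding commutative_lang_def by metis
    have pn': "\<And>x z a m m'. n \<le> m \<Longrightarrow> n \<le> m' \<Longrightarrow> x @ replicate m a @ z \<in> L \<Longrightarrow> x @ replicate m' a @ z \<in> L"
      using pn unfolding pump_def by blast
    have "w'' \<in> L"
    proof (cases "count_list w b = count_list w' b")
      case True then show ?thesis using \<open>w0 \<in> L\<close> unfolding w0_def w''_def by simp
    next
      case False
      then have "n \<le> count_list w b" "n \<le> count_list w' b" using c by blast+
      then show ?thesis using pn'[of "count_list w b" "count_list w' b" "[]" b "removeAll b w"] \<open>w0 \<in> L\<close>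
        unfolding w0_def w''_def by simp
    qed
    moreover have "\<forall>a. count_list w'' a = count_list w' a \<or> (a \<in> A \<and> n \<le> count_list w'' a \<and> n \<le> count_list w' a)"
    proof
      fix a
      show "count_list w'' a = count_list w' a \<or> (a \<in> A \<and> n \<le> count_list w'' a \<and> n \<le> count_list w' a)"
      proof (cases "a = b")
        case True then show ?thesis unfolding w''_def by (simp add: count_removeAll)
      next
        case False
        then have "count_list w'' a = count_list w a" unfolding w''_def by (simp add: count_removeAll)
        then show ?thesis using c False by auto
      qed
    qed
    ultimately show "w' \<in> L" using insert.IH by blast
  qed
qed

lemma cap_equiv:
  assumes comm: "commutative_lang L" and pn: "pump n L"
    and eq: "\<forall>a. min (count_list w a) n = min (count_list w' a) n" and wL: "w \<in> L"
  shows "w' \<in> L"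
proof -
  have "\<forall>a. count_list w a = count_list w' a \<or> (a \<in> set w \<union> set w' \<and> n \<le> count_list w a \<and> n \<le> count_list w' a)"
  proof
    fix a
    show "count_list w a = count_list w' a \<or> (a \<in> set w \<union> set w' \<and> n \<le> count_list w a \<and> n \<le> count_list w' a)"
    proof (cases "count_list w a = count_list w' a")
      case False
      then have "a \<in> set w \<union> set w'" using count_notin by fastforce
      moreover have "n \<le> count_list w a \<and> n \<le> count_list w' a" using eq[rule_format, of a] False
        by (metis min.absorb_iff1 min_def nat_le_linear)
      ultimately show ?thesis by blast
    qed simp
  qed
  then show ?thesis using cap_gen[OF comm pn, of "set w \<union> set w'"] wL by blast
qed

fun G :: "'a set \<Rightarrow> 'a \<Rightarrow> nat \<Rightarrow> 'a list set" where
  "G S a 0 = lists S"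
| "G S a (Suc k) = conc (conc (lists S) {[a]}) (G S a k)"

lemma G_sf: "a \<in> S \<Longrightarrow> star_free S (G S a k)"
  by (induction k) (simp_all add: sf_full sf_conc sf_letter)

lemma conc_mem: "u \<in> L \<Longrightarrow> v \<in> M \<Longrightarrow> u @ v \<in> conc L M"
  unfolding conc_def by blast

lemma conc_memE: "w \<in> conc L M \<Longrightarrow> (\<And>u v. w = u @ v \<Longrightarrow> u \<in> L \<Longrightarrow> v \<in> M \<Longrightarrow> P) \<Longrightarrow> P"
  unfolding conc_def by blast

lemma G_eq: "a \<in> S \<Longrightarrow> G S a k = {v \<in> lists S. k \<le> count_list v a}"
proof (induction k)
  case 0 then show ?case by simp
next
  case (Suc k)
  show ?case
  proof
    show "G S a (Suc k) \<subseteq> {v \<in> lists S. Suc k \<le> count_list v a}"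
    proof
      fix v assume "v \<in> G S a (Suc k)"
      then have "v \<in> conc (conc (lists S) {[a]}) (G S a k)" by simp
      then obtain p q where pq: "v = p @ q" "p \<in> conc (lists S) {[a]}" "q \<in> G S a k"
        by (rule conc_memE)
      from pq(2) obtain r b where r: "p = r @ b" "r \<in> lists S" "b \<in> {[a]}" by (rule conc_memE)
      have q: "q \<in> lists S" "k \<le> count_list q a" using pq(3) Suc by auto
      show "v \<in> {v \<in> lists S. Suc k \<le> count_list v a}" using pq(1) r q Suc.prems by simp
    qed
  next
    show "{v \<in> lists S. Suc k \<le> count_list v a} \<subseteq> G S a (Suc k)"
    proof
      fix v assume v: "v \<in> {v \<in> lists S. Suc k \<le> count_list v a}"
      then have "count_list v a = Suc (count_list v a - 1)" by simp
      then obtain pref rest where pr: "v = pref @ a # rest" "count_list rest a = count_list v a - 1"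
        using count_list_Suc_split_first by metis
      have vS: "v \<in> lists S" and vk: "Suc k \<le> count_list v a" using v by auto
      have "rest \<in> lists S" "pref \<in> lists S" using vS pr(1) by auto
      moreover have "k \<le> count_list rest a" using vk pr(2) by linarith
      ultimately have "rest \<in> lists S" "k \<le> count_list rest a" "pref \<in> lists S" by auto
      then have "rest \<in> G S a k" using Suc by simp
      moreover have "pref @ [a] \<in> conc (lists S) {[a]}" using \<open>pref \<in> lists S\<close> by (intro conc_mem) auto
      ultimately have "(pref @ [a]) @ rest \<in> G S a (Suc k)" by (simp del: append_assoc add: conc_mem)
      then show "v \<in> G S a (Suc k)" using pr by simp
    qed
  qed
qed

definition E :: "'a set \<Rightarrow> nat \<Rightarrow> 'a \<Rightarrow> nat \<Rightarrow> 'a list set" where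
  "E S n a k = {v \<in> lists S. min (count_list v a) n = k}"

lemma E_sf: assumes "a \<in> S" shows "star_free S (E S n a k)"
proof -
  consider "k < n" | "k = n" | "k > n" by arith
  then show ?thesis
  proof cases
    case 1
    then have "E S n a k = G S a k \<inter> (lists S - G S a (Suc k))"
      unfolding E_def G_eq[OF assms] by auto
    then show ?thesis using G_sf[OF assms, of k] G_sf[OF assms, of "Suc k"]
      by (metis sf_compl sf_inter)
  next
    case 2
    then have "E S n a k = G S a n"
      unfolding E_def G_eq[OF assms] by auto
    then show ?thesis using G_sf[OF assms] by auto
  next
    case 3
    then have "E S n a k = lists S - lists S"
      unfolding E_def by auto
    then show ?thesis by (metis sf_compl sf_full)
  qed
qed

lemma sf_Inter:
  "finite I \<Longrightarrow> (\<forall>i\<in>I. star_free S (f i)) \<Longrightarrow> star_free S (lists S \<inter> \<Inter>(f ` I))"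
proof (induction I rule: finite_induct)
  case empty then show ?case by (auto intro: star_free.intros)
next
  case (insert i I)
  have "lists S \<inter> \<Inter>(f ` insert i I) = f i \<inter> (lists S \<inter> \<Inter>(f ` I))" by auto
  then show ?case using insert by (auto intro: star_free.intros)
qed

lemma sf_Union:
  "finite F \<Longrightarrow> (\<forall>X\<in>F. star_free S X) \<Longrightarrow> star_free S (\<Union>F)"
proof (induction F rule: finite_induct)
  case empty
  have "star_free S (lists S - lists S)" by (rule sf_compl[OF sf_full])
  then show ?case by simp
next
  case (insert X F) then show ?case by (auto intro: star_free.intros)
qed


theorem mainTheorem5:
  fixes Sigma Gamma :: "'a set" and L :: "'a list set"
  assumes "finite Sigma"
    and "star_free Sigma L"
    and "commutative_lang L"
    and "Gamma \<subseteq> Sigma"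
  shows "commutative_lang (proj Gamma ` L) \<and> star_free Gamma (proj Gamma ` L)"
proof -
  let ?K = "proj Gamma ` L"
  obtain n where pn: "pump n L" using sf_pump[OF assms(2)] by blast
  have finG: "finite Gamma" using assms(1,4) finite_subset by blast
  have projl: "\<And>w. proj Gamma w \<in> lists Gamma" by (auto simp: proj_def)
  have cnt_proj: "\<And>w a. count_list (proj Gamma w) a = (if a \<in> Gamma then count_list w a else 0)"
    by (simp add: proj_def count_filter)
  define rest where "rest w = filter (\<lambda>x. x \<notin> Gamma) w" for w
  have cnt_rest: "\<And>w a. count_list (rest w) a = (if a \<in> Gamma then 0 else count_list w a)"
    by (simp add: rest_def count_filter)
  have proj_app: "\<And>v w. v \<in> lists Gamma \<Longrightarrow> proj Gamma (v @ rest w) = v"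
  proof -
    fix v w assume "v \<in> lists Gamma"
    then have "filter (\<lambda>x. x \<in> Gamma) v = v" by (auto simp: filter_id_conv)
    moreover have "filter (\<lambda>x. x \<in> Gamma) (rest w) = []" unfolding rest_def by (simp add: filter_empty_conv)
    ultimately show "proj Gamma (v @ rest w) = v" by (simp add: proj_def)
  qed
  have key: "\<And>v w. v \<in> lists Gamma \<Longrightarrow> w \<in> L \<Longrightarrow>
      (\<forall>a\<in>Gamma. min (count_list v a) n = min (count_list w a) n) \<Longrightarrow> v \<in> ?K"
  proof -
    fix v w assume v: "v \<in> lists Gamma" and w: "w \<in> L"
      and c: "\<forall>a\<in>Gamma. min (count_list v a) n = min (count_list w a) n"
    have "\<forall>a. min (count_list w a) n = min (count_list (v @ rest w) a) n"
    proof
      fix a show "min (count_list w a) n = min (count_list (v @ rest w) a) n"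
      proof (cases "a \<in> Gamma")
        case True then show ?thesis using c by (simp add: cnt_rest)
      next
        case False
        then have "a \<notin> set v" using v by auto
        then show ?thesis using False by (simp add: cnt_rest)
      qed
    qed
    then have "v @ rest w \<in> L" using cap_equiv[OF assms(3) pn _ w] by blast
    then show "v \<in> ?K" using proj_app[OF v] by (metis image_eqI)
  qed
  have comm: "commutative_lang ?K"
    unfolding commutative_lang_def
  proof (intro ballI allI impI)
    fix u u' assume "u \<in> ?K" and c: "\<forall>a. count_list u' a = count_list u a"
    then obtain w where w: "w \<in> L" "u = proj Gamma w" by blast
    have "u' \<in> lists Gamma"
      unfolding in_lists_conv_set
    proof
      fix x assume "x \<in> set u'"
      then have "count_list u' x \<noteq> 0" by (simp add: count_list_0_iff)
      then have "count_list (proj Gamma w) x \<noteq> 0" using c w(2) by simp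
      then show "x \<in> Gamma" using cnt_proj by (metis)
    qed
    moreover have "\<forall>a\<in>Gamma. min (count_list u' a) n = min (count_list w a) n"
      using c w(2) cnt_proj by simp
    ultimately show "u' \<in> ?K" using key w(1) by blast
  qed
  define cap where "cap u = restrict (\<lambda>a. min (count_list u a) n) Gamma" for u
  define AtomF where "AtomF f = {v \<in> lists Gamma. \<forall>a\<in>Gamma. min (count_list v a) n = f a}" for f
  have sfA: "star_free Gamma (AtomF f)" for f
  proof -
    have "AtomF f = lists Gamma \<inter> \<Inter>((\<lambda>a. E Gamma n a (f a)) ` Gamma)"
      unfolding AtomF_def E_def by auto
    then show ?thesis using sf_Inter[OF finG, where f="\<lambda>a. E Gamma n a (f a)" and S=Gamma] E_sf by (simp add: E_sf)
  qed
  have Keq: "?K = \<Union>(AtomF ` (cap ` ?K))"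
  proof
    show "?K \<subseteq> \<Union>(AtomF ` (cap ` ?K))"
    proof
      fix u assume u: "u \<in> ?K"
      then have "u \<in> lists Gamma" using projl by blast
      then have "u \<in> AtomF (cap u)" unfolding AtomF_def cap_def by simp
      then show "u \<in> \<Union>(AtomF ` (cap ` ?K))" using u by blast
    qed
  next
    show "\<Union>(AtomF ` (cap ` ?K)) \<subseteq> ?K"
    proof
      fix v assume "v \<in> \<Union>(AtomF ` (cap ` ?K))"
      then obtain u where u: "u \<in> ?K" "v \<in> AtomF (cap u)" by blast
      then obtain w where w: "w \<in> L" "u = proj Gamma w" by blast
      have "v \<in> lists Gamma" using u(2) unfolding AtomF_def by simp
      moreover have "\<forall>a\<in>Gamma. min (count_list v a) n = min (count_list w a) n"
        using u(2) w(2) cnt_proj unfolding AtomF_def cap_def by simp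
      ultimately show "v \<in> ?K" using key w(1) by blast
    qed
  qed
  have "cap ` ?K \<subseteq> PiE Gamma (\<lambda>_. {..n})" unfolding cap_def by auto
  then have "finite (cap ` ?K)" using finite_PiE[OF finG] finite_subset by (metis finite_atMost)
  then have "star_free Gamma (\<Union>(AtomF ` (cap ` ?K)))"
    using sf_Union[of "AtomF ` (cap ` ?K)" Gamma] sfA by blast
  then show ?thesis using comm Keq by simp
qed

end
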